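(* Let $G$ be a group, $k\ge1$ and $s\ge0$ integers such that for every $i<k$ there is a set $A_i\subseteq G$ with $|A_i|\le s$ such that $Z(G/Z_i(G))=C_{G/Z_i(G)}(A_i)$ (where $A_i$ is read via its image in $G/Z_i(G)$). Let $c\in G$. If the set $\{(x_0,\dots,x_k)\in G^{k+1}:[x_0,x_1,\dots,x_k]=c\}$ is $2(s+1)^k$-large in $G^{k+1}$, then $c=1$ and $G$ is nilpotent of class at most $k$.
   Context: $[a,b]=a^{-1}b^{-1}ab$ and commutators are left-normed: $[x_0,x_1,\dots,x_{j+1}]=[[x_0,\dots,x_j],x_{j+1}]$. $Z_i(G)$ denotes the $i$-th term of the upper central series ($Z_0(G)=1$, $Z_{i+1}(G)/Z_i(G)=Z(G/Z_i(G))$). A subset $X$ of a group $K$ is $m$-large in $K$ if the intersection of any $m$ left translates $a_1X\cap\dots\cap a_mX$ ($a_i\in K$) is non-empty. *)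

theory Defs
  imports "HOL-Algebra.Algebra"
begin

definition comm :: "('a, 'b) monoid_scheme \<Rightarrow> 'a \<Rightarrow> 'a \<Rightarrow> 'a" where
  "comm G a b = inv\<^bsub>G\<^esub> a \<otimes>\<^bsub>G\<^esub> inv\<^bsub>G\<^esub> b \<otimes>\<^bsub>G\<^esub> a \<otimes>\<^bsub>G\<^esub> b"

fun lcomm :: "('a, 'b) monoid_scheme \<Rightarrow> (nat \<Rightarrow> 'a) \<Rightarrow> nat \<Rightarrow> 'a" where
  "lcomm G x 0 = x 0"
| "lcomm G x (Suc j) = comm G (lcomm G x j) (x (Suc j))"

definition centre :: "('a, 'b) monoid_scheme \<Rightarrow> 'a set" where
  "centre M = {z \<in> carrier M. \<forall>g\<in>carrier M. z \<otimes>\<^bsub>M\<^esub> g = g \<otimes>\<^bsub>M\<^esub> z}"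

definition centralizer :: "('a, 'b) monoid_scheme \<Rightarrow> 'a set \<Rightarrow> 'a set" where
  "centralizer M A = {z \<in> carrier M. \<forall>a\<in>A. z \<otimes>\<^bsub>M\<^esub> a = a \<otimes>\<^bsub>M\<^esub> z}"

fun upper_central :: "('a, 'b) monoid_scheme \<Rightarrow> nat \<Rightarrow> 'a set" where
  "upper_central G 0 = {\<one>\<^bsub>G\<^esub>}"
| "upper_central G (Suc i) =
     {g \<in> carrier G. upper_central G i #>\<^bsub>G\<^esub> g \<in> centre (G Mod upper_central G i)}"

definition m_large :: "nat \<Rightarrow> ('a, 'b) monoid_scheme \<Rightarrow> 'a set \<Rightarrow> bool" where
  "m_large m M S \<longleftrightarrow>
     (\<forall>a :: nat \<Rightarrow> 'a. (\<forall>j<m. a j \<in> carrier M) \<longrightarrow> (\<Inter>j<m. l_coset M (a j) S) \<noteq> {})"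

end

theory Submission
  imports Defs
begin

context group begin

lemma cancel1[simp]: "x \<in> carrier G \<Longrightarrow> y \<in> carrier G \<Longrightarrow> x \<otimes> (inv x \<otimes> y) = y"
  by (simp add: m_assoc[symmetric])
lemma cancel2[simp]: "x \<in> carrier G \<Longrightarrow> y \<in> carrier G \<Longrightarrow> inv x \<otimes> (x \<otimes> y) = y"
  by (simp add: m_assoc[symmetric])

lemma comm_closed[simp]: "x \<in> carrier G \<Longrightarrow> y \<in> carrier G \<Longrightarrow> comm G x y \<in> carrier G"
  by (simp add: comm_def)

lemma rcos_eq_iff:
  assumes "subgroup N G" "a \<in> carrier G" "b \<in> carrier G"
  shows "(N #> a = N #> b) \<longleftrightarrow> a \<otimes> inv b \<in> N"
  by (metis assms repr_independence repr_independenceD subgroup.rcos_module is_group rcos_self)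

lemma comm_alt: "x \<in> carrier G \<Longrightarrow> g \<in> carrier G \<Longrightarrow>
   comm G x g = inv (g \<otimes> x) \<otimes> ((x \<otimes> g) \<otimes> inv (g \<otimes> x)) \<otimes> (g \<otimes> x)"
  by (simp add: comm_def inv_mult_group m_assoc)

lemma comm_cosets:
  assumes "N \<lhd> G" "x \<in> carrier G" "g \<in> carrier G"
  shows "((N #> x) <#> (N #> g) = (N #> g) <#> (N #> x)) \<longleftrightarrow> comm G x g \<in> N"
proof -
  interpret N: normal N G by fact
  have "((N #> x) <#> (N #> g) = (N #> g) <#> (N #> x)) \<longleftrightarrow> (x \<otimes> g) \<otimes> inv (g \<otimes> x) \<in> N"
    using assms by (simp add: N.rcos_sum rcos_eq_iff N.subgroup_axioms)
  also have "\<dots> \<longleftrightarrow> comm G x g \<in> N"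
  proof
    assume "(x \<otimes> g) \<otimes> inv (g \<otimes> x) \<in> N"
    then show "comm G x g \<in> N" using assms comm_alt N.inv_op_closed1 by simp
  next
    assume h: "comm G x g \<in> N"
    have "(x \<otimes> g) \<otimes> inv (g \<otimes> x) = (g \<otimes> x) \<otimes> comm G x g \<otimes> inv (g \<otimes> x)"
      using assms by (simp add: comm_def inv_mult_group m_assoc)
    then show "(x \<otimes> g) \<otimes> inv (g \<otimes> x) \<in> N" using h assms N.inv_op_closed2 by simp
  qed
  finally show ?thesis .
qed

lemma centre_Mod_iff:
  assumes "N \<lhd> G" "x \<in> carrier G"
  shows "N #> x \<in> centre (G Mod N) \<longleftrightarrow> (\<forall>g\<in>carrier G. comm G x g \<in> N)"
  using assms comm_cosets[OF assms(1) assms(2)]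
  by (auto simp: centre_def carrier_FactGroup)

lemma centralizer_Mod_iff:
  assumes "N \<lhd> G" "x \<in> carrier G" "A \<subseteq> carrier G"
  shows "N #> x \<in> centralizer (G Mod N) ((\<lambda>a. N #> a) ` A) \<longleftrightarrow> (\<forall>g\<in>A. comm G x g \<in> N)"
  using assms comm_cosets[OF assms(1) assms(2)]
  by (auto simp: centralizer_def carrier_FactGroup)


lemma comm_mult: "x \<in> carrier G \<Longrightarrow> y \<in> carrier G \<Longrightarrow> g \<in> carrier G \<Longrightarrow>
  comm G (x \<otimes> y) g = inv y \<otimes> comm G x g \<otimes> y \<otimes> comm G y g"
  by (simp add: comm_def inv_mult_group m_assoc)

lemma comm_inv: "x \<in> carrier G \<Longrightarrow> g \<in> carrier G \<Longrightarrow>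
  comm G (inv x) g = x \<otimes> inv (comm G x g) \<otimes> inv x"
  by (simp add: comm_def inv_mult_group m_assoc)

lemma conj_eq: "x \<in> carrier G \<Longrightarrow> z \<in> carrier G \<Longrightarrow>
  z \<otimes> x \<otimes> inv z = x \<otimes> comm G x (inv z)"
  by (simp add: comm_def m_assoc)

lemma comm_normal: "N \<lhd> G \<Longrightarrow> n \<in> N \<Longrightarrow> g \<in> carrier G \<Longrightarrow> comm G n g \<in> N"
proof -
  assume N: "N \<lhd> G" and n: "n \<in> N" and g: "g \<in> carrier G"
  interpret N: normal N G by fact
  have nc: "n \<in> carrier G" using n N.subset by auto
  have "comm G n g = inv n \<otimes> (inv g \<otimes> n \<otimes> g)" using nc g by (simp add: comm_def m_assoc)
  then show ?thesis using N.inv_op_closed1[OF g n] n N.m_inv_closed N.m_closed by simp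
qed

lemma next_normal:
  assumes N: "N \<lhd> G"
  shows "{x\<in>carrier G. \<forall>g\<in>carrier G. comm G x g \<in> N} \<lhd> G" (is "?Z \<lhd> G")
proof -
  interpret N: normal N G by fact
  have sub: "N \<subseteq> ?Z" using comm_normal[OF N] N.subset by auto
  have mult: "x \<otimes> y \<in> ?Z" if "x \<in> ?Z" "y \<in> ?Z" for x y
  proof -
    have "comm G (x \<otimes> y) g \<in> N" if g: "g \<in> carrier G" for g
    proof -
      have "inv y \<otimes> comm G x g \<otimes> y \<in> N"
        using N.inv_op_closed1 \<open>x \<in> ?Z\<close> \<open>y \<in> ?Z\<close> g by auto
      then show ?thesis using comm_mult \<open>x \<in> ?Z\<close> \<open>y \<in> ?Z\<close> g N.m_closed by auto
    qed
    then show ?thesis using that by auto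
  qed
  have "subgroup ?Z G"
  proof (rule subgroupI)
    show "?Z \<subseteq> carrier G" by auto
    show "?Z \<noteq> {}" using sub N.one_closed by blast
    show "inv a \<in> ?Z" if a: "a \<in> ?Z" for a
    proof -
      have "comm G (inv a) g \<in> N" if g: "g \<in> carrier G" for g
        using comm_inv[of a g] a g N.inv_op_closed2 N.m_inv_closed by auto
      then show ?thesis using a by auto
    qed
    show "a \<otimes> b \<in> ?Z" if "a \<in> ?Z" "b \<in> ?Z" for a b using mult that .
  qed
  moreover have "z \<otimes> x \<otimes> inv z \<in> ?Z" if "z \<in> carrier G" "x \<in> ?Z" for z x
  proof -
    have "comm G x (inv z) \<in> ?Z" using that sub by auto
    then show ?thesis using conj_eq[of x z] mult that by auto
  qed
  ultimately show ?thesis by (rule normal_invI)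
qed

lemma upper_central_normal: "upper_central G i \<lhd> G \<and>
   upper_central G (Suc i) = {x\<in>carrier G. \<forall>g\<in>carrier G. comm G x g \<in> upper_central G i}"
proof (induction i)
  case 0
  then show ?case using centre_Mod_iff[OF one_is_normal] by (auto simp: one_is_normal)
next
  case (Suc i)
  then have n: "upper_central G (Suc i) \<lhd> G" using next_normal by simp
  then show ?case using centre_Mod_iff[OF n] by auto
qed


lemma key_step:
  assumes N: "N \<lhd> G" and c: "u \<in> carrier G" "a \<in> carrier G" "y \<in> carrier G"
    and h: "inv (comm G u y) \<otimes> comm G u (a \<otimes> y) \<in> N"
  shows "comm G u a \<in> N"
proof -
  interpret N: normal N G by fact
  have "inv (comm G u y) \<otimes> comm G u (a \<otimes> y) = inv y \<otimes> comm G u a \<otimes> y"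
    using c by (simp add: comm_def inv_mult_group m_assoc)
  then have "inv y \<otimes> comm G u a \<otimes> y \<in> N" using h by simp
  then have "y \<otimes> (inv y \<otimes> comm G u a \<otimes> y) \<otimes> inv y \<in> N"
    using N.inv_op_closed2 c by blast
  moreover have "y \<otimes> (inv y \<otimes> comm G u a \<otimes> y) \<otimes> inv y = comm G u a"
    using c by (simp add: m_assoc)
  ultimately show ?thesis by simp
qed

lemma lcomm_closed: "(\<And>j. j \<le> n \<Longrightarrow> x j \<in> carrier G) \<Longrightarrow> lcomm G x n \<in> carrier G"
  by (induction n) auto

end

lemma lcomm_cong: "(\<And>j. j \<le> n \<Longrightarrow> x j = x' j) \<Longrightarrow> lcomm G x n = lcomm G x' n"
  by (induction n) auto


lemma (in group) main_thm:
  assumes "k \<ge> 1"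
    and "\<forall>i<k. \<exists>A. A \<subseteq> carrier G \<and> finite A \<and> card A \<le> s \<and>
           centre (G Mod upper_central G i) =
           centralizer (G Mod upper_central G i) ((\<lambda>a. upper_central G i #> a) ` A)"
    and "c \<in> carrier G"
    and "m_large (2 * (s + 1) ^ k) (product_group {..k} (\<lambda>_. G))
           {x \<in> carrier (product_group {..k} (\<lambda>_. G)). lcomm G x k = c}"
  shows "c = \<one> \<and> upper_central G k = carrier G"
proof -
  define Z where "Z = upper_central G"
  define P where "P = product_group {..k} (\<lambda>_. G)"
  define XX where "XX = {x \<in> carrier P. lcomm G x k = c}"
  define m where "m = 2 * (s + 1) ^ k"
  have ZN: "\<And>i. Z i \<lhd> G" unfolding Z_def using upper_central_normal by blast
  have Zsuc: "\<And>i. Z (Suc i) = {x\<in>carrier G. \<forall>g\<in>carrier G. comm G x g \<in> Z i}"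
    unfolding Z_def using upper_central_normal by blast
  have "\<forall>i<k. \<exists>A. A \<subseteq> carrier G \<and> finite A \<and> card A \<le> s \<and>
           (\<forall>x\<in>carrier G. (\<forall>a\<in>A. comm G x a \<in> Z i) \<longrightarrow> x \<in> Z (Suc i))"
  proof (intro allI impI)
    fix i assume "i < k"
    then obtain A where A: "A \<subseteq> carrier G" "finite A" "card A \<le> s"
      "centre (G Mod Z i) = centralizer (G Mod Z i) ((\<lambda>a. Z i #> a) ` A)"
      using assms(2) unfolding Z_def by blast
    have "x \<in> Z (Suc i)" if x: "x \<in> carrier G" "\<forall>a\<in>A. comm G x a \<in> Z i" for x
    proof -
      have "Z i #> x \<in> centre (G Mod Z i)"
        using A(4) centralizer_Mod_iff[OF ZN x(1) A(1)] x(2) by simp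
      then show ?thesis using centre_Mod_iff[OF ZN x(1)] Zsuc x(1) by auto
    qed
    then show "\<exists>A. A \<subseteq> carrier G \<and> finite A \<and> card A \<le> s \<and>
           (\<forall>x\<in>carrier G. (\<forall>a\<in>A. comm G x a \<in> Z i) \<longrightarrow> x \<in> Z (Suc i))"
      using A by blast
  qed
  then obtain A where A: "\<And>i. i < k \<Longrightarrow> A i \<subseteq> carrier G \<and> finite (A i) \<and> card (A i) \<le> s \<and>
           (\<forall>x\<in>carrier G. (\<forall>a\<in>A i. comm G x a \<in> Z i) \<longrightarrow> x \<in> Z (Suc i))"
    by metis
  define T where "T i = insert \<one> (A i)" for i
  have main: "g \<in> Z k \<and> c = \<one>" if g: "g \<in> carrier G" for g
  proof -
    define S where "S = (\<Pi>\<^sub>E j\<in>{..k}. if j = 0 then {\<one>, g} else T (k - j))"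
    have TA: "T (k - j) \<subseteq> carrier G" "finite (T (k - j))" "card (T (k - j)) \<le> s + 1"
      if "1 \<le> j" "j \<le> k" for j
    proof -
      have "k - j < k" using that assms(1) by auto
      then have a: "A (k - j) \<subseteq> carrier G" "finite (A (k - j))" "card (A (k - j)) \<le> s"
        using A by auto
      then show "T (k - j) \<subseteq> carrier G" "finite (T (k - j))" using T_def by auto
      show "card (T (k - j)) \<le> s + 1" using a unfolding T_def
        by (simp add: card_insert_if)
    qed
    have SP: "S \<subseteq> carrier P"
    proof
      fix t assume t: "t \<in> S"
      have "t j \<in> carrier G" if j: "j \<in> {..k}" for j
      proof (cases "j = 0")
        case True
        then have "t j \<in> {\<one>, g}" using PiE_mem[OF t[unfolded S_def] j] by simp
        then show ?thesis using g by auto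
      next
        case False
        then have "t j \<in> T (k - j)" using t j unfolding S_def by (auto simp: PiE_def Pi_def)
        then show ?thesis using TA[of j] False j by auto
      qed
      then show "t \<in> carrier P" using t unfolding P_def S_def by (auto simp: PiE_def Pi_def)
    qed
    have finS: "finite S" unfolding S_def using TA by (intro finite_PiE) auto
    have cardS: "card S \<le> m"
    proof -
      have "card S = (\<Prod>j\<in>{..k}. card (if j = 0 then {\<one>, g} else T (k - j)))"
        unfolding S_def by (simp add: card_PiE)
      also have "\<dots> = card {\<one>, g} * (\<Prod>j\<in>{1..k}. card (T (k - j)))"
      proof -
        have "{..k} = insert 0 {1..k}" by auto
        then show ?thesis by (simp add: prod.insert)
      qed
      also have "\<dots> \<le> 2 * (\<Prod>j\<in>{1..k}. s + 1)"
      proof (rule mult_mono)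
        show "card {\<one>, g} \<le> 2" by (simp add: card_insert_if)
        show "(\<Prod>j\<in>{1..k}. card (T (k - j))) \<le> (\<Prod>j\<in>{1..k}. s + 1)"
          by (rule prod_mono) (use TA in auto)
      qed auto
      also have "\<dots> = m" unfolding m_def by simp
      finally show ?thesis .
    qed
    define e where "e h = (\<lambda>j\<in>{..k}. if j = 0 then h else \<one>)" for h
    have eS: "e \<one> \<in> S" "e g \<in> S" unfolding e_def S_def T_def by auto
    then have Sne: "S \<noteq> {}" by auto
    then have cS: "card S > 0" using finS by (simp add: card_gt_0_iff)
    obtain f where f: "bij_betw f {0..<card S} S" using ex_bij_betw_nat_finite finS by blast
    define invt where "invt t = (\<lambda>j\<in>{..k}. inv (t j))" for t :: "nat \<Rightarrow> 'a"
    define a where "a j = invt (f (if j < card S then j else 0))" for j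
    have fS: "f j \<in> S" if "j < card S" for j using f that by (auto simp: bij_betw_def)
    have aP: "a j \<in> carrier P" for j
    proof -
      have "f (if j < card S then j else 0) \<in> S" using fS cS by auto
      then show ?thesis using SP unfolding a_def invt_def P_def by (auto simp: PiE_def Pi_def)
    qed
    have "(\<Inter>j<m. l_coset P (a j) XX) \<noteq> {}"
      using assms(4) aP unfolding m_large_def P_def XX_def m_def by blast
    then obtain y where y: "\<And>j. j < m \<Longrightarrow> y \<in> l_coset P (a j) XX" by blast
    have "0 < m" unfolding m_def by simp
    then have yP: "y \<in> carrier P" using y[of 0] aP[of 0] unfolding l_coset_def XX_def P_def
      by (auto simp: PiE_def Pi_def)
    define w where "w t = (\<lambda>j. t j \<otimes> y j)" for t
    have wc: "w t j \<in> carrier G" if "t \<in> S" "j \<le> k" for t j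
      using that SP yP unfolding w_def P_def by (auto simp: PiE_def Pi_def)
    have lc: "lcomm G (w t) k = c" if t: "t \<in> S" for t
    proof -
      obtain j where j: "j < card S" "f j = t" using f t unfolding bij_betw_def by (metis atLeastLessThan_iff imageE)
      have "j < m" using j cardS by simp
      then have "y \<in> l_coset P (a j) XX" by (rule y)
      then obtain x where x: "x \<in> XX" "y = a j \<otimes>\<^bsub>P\<^esub> x" unfolding l_coset_def by auto
      have "x i = t i \<otimes> y i" if i: "i \<le> k" for i
      proof -
        have xi: "x i \<in> carrier G" using x(1) i unfolding XX_def P_def by (auto simp: PiE_def Pi_def)
        have ti: "t i \<in> carrier G" using t SP i unfolding P_def by (auto simp: PiE_def Pi_def)
        have "y i = inv (t i) \<otimes> x i" using x(2) i j unfolding a_def invt_def P_def by simp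
        then show ?thesis using xi ti by simp
      qed
      then have "lcomm G (w t) k = lcomm G x k" unfolding w_def by (intro lcomm_cong) auto
      then show ?thesis using x(1) unfolding XX_def by simp
    qed
    have Q: "1 \<le> r \<longrightarrow> r \<le> k \<longrightarrow> (\<forall>t\<in>S. lcomm G (w t) (k - r) \<in> Z r)" for r
    proof (induction r)
      case 0
      then show ?case by simp
    next
      case (Suc r)
      show ?case
      proof (intro impI ballI)
        fix t assume r: "Suc r \<le> k" and t: "t \<in> S"
        define n where "n = k - Suc r"
        have n: "Suc n = k - r" "n < k" "Suc n \<le> k" "k - Suc n = r" using r unfolding n_def by auto
        define u where "u = lcomm G (w t) n"
        have uc: "u \<in> carrier G" unfolding u_def using wc t n by (intro lcomm_closed) auto
        have "comm G u b \<in> Z r" if b: "b \<in> A r" for b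
        proof -
          have rk: "r < k" using r by simp
          have bc: "b \<in> carrier G" using A[OF rk] b by auto
          define t1 where "t1 = t(Suc n := b)"
          define t0 where "t0 = t(Suc n := \<one>)"
          have upd: "t(Suc n := v) \<in> S" if v: "v \<in> T r" for v
          proof -
            have tS: "t \<in> (\<Pi>\<^sub>E j\<in>{..k}. if j = 0 then {\<one>, g} else T (k - j))" using t S_def by simp
            have "\<forall>i\<in>{..k}. (t(Suc n := v)) i \<in> (if i = 0 then {\<one>, g} else T (k - i))"
            proof
              fix i assume i: "i \<in> {..k}"
              show "(t(Suc n := v)) i \<in> (if i = 0 then {\<one>, g} else T (k - i))"
              proof (cases "i = Suc n")
                case True
                then show ?thesis using v n r by (simp del: One_nat_def)
              next
                case False
                then show ?thesis using PiE_mem[OF tS i] by simp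
              qed
            qed
            moreover have "t \<in> extensional {..k}" using tS by (simp add: PiE_iff)
            then have "t(Suc n := v) \<in> extensional {..k}"
              using n(3) by (auto simp: extensional_def)
            ultimately show ?thesis unfolding S_def by (simp add: PiE_iff)
          qed
          have t1S: "t1 \<in> S" unfolding t1_def using upd b T_def by simp
          have t0S: "t0 \<in> S" unfolding t0_def using upd T_def by simp
          have u1: "lcomm G (w t1) n = u" unfolding u_def w_def t1_def by (intro lcomm_cong) auto
          have u0: "lcomm G (w t0) n = u" unfolding u_def w_def t0_def by (intro lcomm_cong) auto
          have yc: "y (Suc n) \<in> carrier G" using yP n unfolding P_def by (auto simp: PiE_def Pi_def)
          have e1: "lcomm G (w t1) (Suc n) = comm G u (b \<otimes> y (Suc n))"
            using u1 unfolding w_def t1_def by simp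
          have e0: "lcomm G (w t0) (Suc n) = comm G u (y (Suc n))"
            using u0 yc unfolding w_def t0_def by simp
          have "inv (comm G u (y (Suc n))) \<otimes> comm G u (b \<otimes> y (Suc n)) \<in> Z r"
          proof (cases "r = 0")
            case True
            then have "Suc n = k" using n by simp
            then have "comm G u (b \<otimes> y (Suc n)) = c" "comm G u (y (Suc n)) = c"
              using lc[OF t1S] lc[OF t0S] e1 e0 by auto
            then show ?thesis using True assms(3) unfolding Z_def by simp
          next
            case False
            then have "lcomm G (w t1) (k - r) \<in> Z r" "lcomm G (w t0) (k - r) \<in> Z r"
              using Suc.IH r t1S t0S by auto
            then have "comm G u (b \<otimes> y (Suc n)) \<in> Z r" "comm G u (y (Suc n)) \<in> Z r"
              using e1 e0 n by auto
            moreover have sg: "subgroup (Z r) G" using ZN[of r] normal_imp_subgroup by blast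
            ultimately show ?thesis by (simp add: subgroup.m_closed[OF sg] subgroup.m_inv_closed[OF sg])
          qed
          then show ?thesis using key_step[OF ZN uc bc yc] by simp
        qed
        then have "u \<in> Z (Suc r)" using A[of r] r uc by auto
        moreover have "lcomm G (w t) (k - Suc r) = u" unfolding u_def n_def ..
        ultimately show "lcomm G (w t) (k - Suc r) \<in> Z (Suc r)" by simp
      qed
    qed
    have Qk: "t 0 \<otimes> y 0 \<in> Z k" if "t \<in> S" for t
      using Q[of k] assms(1) that unfolding w_def by auto
    have y0: "y 0 \<in> carrier G" using yP unfolding P_def by (auto simp: PiE_def Pi_def)
    have "y 0 \<in> Z k" using Qk[OF eS(1)] y0 unfolding e_def by simp
    moreover have "g \<otimes> y 0 \<in> Z k" using Qk[OF eS(2)] unfolding e_def by simp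
    ultimately have gZ: "g \<in> Z k"
    proof -
      assume h: "y 0 \<in> Z k" "g \<otimes> y 0 \<in> Z k"
      have sg: "subgroup (Z k) G" using ZN normal_imp_subgroup by blast
      have "g \<otimes> y 0 \<otimes> inv (y 0) \<in> Z k"
        using h by (simp add: subgroup.m_closed[OF sg] subgroup.m_inv_closed[OF sg])
      then show ?thesis using g y0 by (simp add: m_assoc)
    qed
    have "lcomm G (w (e \<one>)) (k - 1) \<in> Z 1" using Q[of 1] assms(1) eS(1) by auto
    then have "comm G (lcomm G (w (e \<one>)) (k - 1)) (w (e \<one>) k) \<in> Z 0"
      using Zsuc[of 0] wc[OF eS(1)] by auto
    moreover have "lcomm G (w (e \<one>)) k = comm G (lcomm G (w (e \<one>)) (k - 1)) (w (e \<one>) k)"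
      using assms(1) by (cases k) auto
    ultimately have "c \<in> Z 0" using lc[OF eS(1)] by simp
    then have "c = \<one>" unfolding Z_def by simp
    with gZ show ?thesis by simp
  qed
  have "Z k \<subseteq> carrier G" using ZN normal_imp_subgroup subgroup.subset by blast
  then show ?thesis using main one_closed unfolding Z_def by blast
qed


theorem theorem5p13:
  fixes G :: "('a, 'b) monoid_scheme" and k s :: nat and c :: 'a
  assumes "group G"
    and "k \<ge> 1"
    and "\<forall>i<k. \<exists>A. A \<subseteq> carrier G \<and> finite A \<and> card A \<le> s \<and>
           centre (G Mod upper_central G i) =
           centralizer (G Mod upper_central G i) ((\<lambda>a. upper_central G i #>\<^bsub>G\<^esub> a) ` A)"
    and "c \<in> carrier G"
    and "m_large (2 * (s + 1) ^ k) (product_group {..k} (\<lambda>_. G))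
           {x \<in> carrier (product_group {..k} (\<lambda>_. G)). lcomm G x k = c}"
  shows "c = \<one>\<^bsub>G\<^esub> \<and> upper_central G k = carrier G"
  using group.main_thm[OF assms(1) assms(2) assms(3) assms(4) assms(5)] .

end
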